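(* For all integers $p \ge 0$ and $n \ge 1$, \[ p! + \sum_{t=0}^{p} \begin{bmatrix} p+1 \\ t+1 \end{bmatrix} S_t(n) = p! \binom{n+p+1}{p+1}. \]
   Context: $S_t(n) = 1^t + 2^t + \cdots + n^t$ for integers $t \ge 0$ (so $S_0(n)=n$). $\begin{bmatrix} m \\ k \end{bmatrix}$ denotes the unsigned Stirling number of the first kind: the number of permutations of $m$ elements with exactly $k$ cycles. *)

theory Defs
  imports Main "HOL-Combinatorics.Stirling"
begin

definition power_sum :: "nat \<Rightarrow> nat \<Rightarrow> nat" where
  "power_sum t n = (\<Sum>k=1..n. k ^ t)"

end

theory Submission
  imports Defs
begin

lemma poch_choose: "pochhammer (k+1) p = fact p * ((k+p) choose p :: nat)"
proof (induction p)
  case 0 then show ?case by simp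
next
  case (Suc p)
  have "pochhammer (k+1) (Suc p) = fact p * ((k+p) choose p) * (k+1+p)"
    using Suc by (simp add: pochhammer_Suc)
  also have "\<dots> = fact p * (Suc (k+p) * ((k+p) choose p))" by (simp add: algebra_simps)
  also have "\<dots> = fact p * ((Suc (k+p) choose Suc p) * Suc p)"
    by (simp only: Suc_times_binomial_eq)
  also have "\<dots> = fact (Suc p) * ((k + Suc p) choose Suc p)" by (simp add: algebra_simps)
  finally show ?case .
qed

lemma stir_sum: "(\<Sum>t=0..p. stirling (p+1) (t+1) * k^t) = pochhammer (k+1) p"
proof (cases "k = 0")
  case True
  have "(\<Sum>t=0..p. stirling (p+1) (t+1) * k^t) = (\<Sum>t\<in>{0}. stirling (p+1) (t+1) * k^t)"
    by (rule sum.mono_neutral_right) (auto simp: True)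
  then show ?thesis using True stirling_Suc_n_1[of p] by (simp add: pochhammer_fact del: stirling.simps)
next
  case False
  have "k * (\<Sum>t=0..p. stirling (p+1) (t+1) * k^t) = (\<Sum>t\<le>p. stirling (p+1) (Suc t) * k^(Suc t))"
    by (simp add: sum_distrib_left atLeast0AtMost algebra_simps)
  also have "\<dots> = (\<Sum>j\<le>Suc p. stirling (p+1) j * k^j)"
    by (subst sum.atMost_Suc_shift) simp
  also have "\<dots> = pochhammer k (Suc p)"
    using stirling_pochhammer[of "Suc p" k] by simp
  also have "\<dots> = k * pochhammer (k+1) p" by (simp add: pochhammer_rec)
  finally show ?thesis using False by simp
qed

theorem mainTheorem5:
  fixes p n :: nat
  assumes "n \<ge> 1"
  shows "fact p + (\<Sum>t=0..p. stirling (p+1) (t+1) * power_sum t n)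
           = fact p * ((n + p + 1) choose (p + 1))"
proof -
  have "(\<Sum>t=0..p. stirling (p+1) (t+1) * power_sum t n)
      = (\<Sum>k=1..n. \<Sum>t=0..p. stirling (p+1) (t+1) * k^t)"
    unfolding power_sum_def by (simp add: sum_distrib_left del: stirling.simps) (rule sum.swap)
  also have "\<dots> = (\<Sum>k=1..n. fact p * ((p+k) choose k))"
  proof (rule sum.cong[OF refl])
    fix k :: nat
    have "(k+p) choose p = (p+k) choose k"
      using binomial_symmetric[of p "k+p"] by (simp add: add.commute)
    then show "(\<Sum>t=0..p. stirling (p+1) (t+1) * k^t) = fact p * ((p+k) choose k)"
      by (simp only: stir_sum poch_choose)
  qed
  finally have 1: "(\<Sum>t=0..p. stirling (p+1) (t+1) * power_sum t n) = (\<Sum>k=1..n. fact p * ((p+k) choose k))" .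
  have "fact p + (\<Sum>k=1..n. fact p * ((p+k) choose k)) = (\<Sum>k\<le>n. fact p * ((p+k) choose k))"
  proof -
    have "{..n} = insert 0 {1..n}" by auto
    then have "(\<Sum>k\<le>n. fact p * ((p+k) choose k)) = fact p * ((p+0) choose 0) + (\<Sum>k=1..n. fact p * ((p+k) choose k))"
      by (simp only: sum.insert[of "{1..n}" 0] finite_atLeastAtMost) auto
    then show ?thesis by simp
  qed
  also have "\<dots> = fact p * (Suc (p+n) choose n)" by (simp add: sum_distrib_left[symmetric] sum_choose_lower)
  also have "\<dots> = fact p * ((n + p + 1) choose (p + 1))"
    using binomial_symmetric[of n "Suc (p+n)"] by (simp add: add.commute)
  finally show ?thesis using 1 by simp
qed

end
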